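(* Let $X$ be a topological space and $f\colon X\to\mathbb{R}^d$ an injective function. Suppose there exists a continuous map $\psi\colon S^1\to X$ such that $\psi(x)\neq\psi(-x)$ for all $x\in S^1$. Then $\alpha(f)=0$ if and only if $f$ is continuous.
   Context: $\mathrm{Conf}_2(X)=\{(x,y)\in X\times X: x\neq y\}$ with the subspace topology. $S^{d-1}$ carries the geodesic metric $d(u,v)=\arccos\langle u,v\rangle$ (for $d=1$, $S^0=\{\pm1\}$ with the two points at distance $\pi$). For a topological space $X$ and a metric space $Y$, $\delta(g)=\inf\{\delta\ge 0 : \text{for every } x\in X \text{ there is an open neighborhood } U_x \text{ of } x \text{ with } \operatorname{diam}(g(U_x))\le\delta\}$. For injective $f\colon X\to\mathbb{R}^d$, $\Phi_f(x,y)=\frac{f(x)-f(y)}{\|f(x)-f(y)\|}$ and $\alpha(f)=\delta(\Phi_f)$. *)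

theory Defs
  imports "HOL-Analysis.Analysis"
begin

definition conf2 :: "'a topology \<Rightarrow> ('a \<times> 'a) topology" where
  "conf2 X = subtopology (prod_topology X X)
     {(x, y). x \<in> topspace X \<and> y \<in> topspace X \<and> x \<noteq> y}"

definition geod_dist :: "'b::euclidean_space \<Rightarrow> 'b \<Rightarrow> real" where
  "geod_dist u v = arccos (inner u v)"

definition diam_wrt :: "('b \<Rightarrow> 'b \<Rightarrow> real) \<Rightarrow> 'b set \<Rightarrow> real" where
  "diam_wrt dd S = Sup {dd u v | u v. u \<in> S \<and> v \<in> S}"

definition delta_wrt :: "'a topology \<Rightarrow> ('b \<Rightarrow> 'b \<Rightarrow> real) \<Rightarrow> ('a \<Rightarrow> 'b) \<Rightarrow> real" where
  "delta_wrt T dd g = Inf {\<delta>. \<delta> \<ge> 0 \<and>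
     (\<forall>p \<in> topspace T. \<exists>U. openin T U \<and> p \<in> U \<and> diam_wrt dd (g ` U) \<le> \<delta>)}"

definition Phi :: "('a \<Rightarrow> 'b::euclidean_space) \<Rightarrow> 'a \<times> 'a \<Rightarrow> 'b" where
  "Phi f = (\<lambda>(x, y). (f x - f y) /\<^sub>R norm (f x - f y))"

definition alpha :: "'a topology \<Rightarrow> ('a \<Rightarrow> 'b::euclidean_space) \<Rightarrow> real" where
  "alpha X f = delta_wrt (conf2 X) geod_dist (Phi f)"

end

theory Submission
  imports Defs
begin


lemma triang_eq:
  fixes b c p :: "'b::euclidean_space"
  assumes "p \<noteq> b" "p \<noteq> c" "(sgn (p-b) \<bullet> sgn (p-c))^2 \<noteq> 1"
  shows "p = b + (((c-b) \<bullet> sgn (p-b) - (sgn (p-b) \<bullet> sgn (p-c)) * ((c-b) \<bullet> sgn (p-c)))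
                  / (1 - (sgn (p-b) \<bullet> sgn (p-c))^2)) *\<^sub>R sgn (p-b)"
proof -
  define v where "v = sgn (p-b)"
  define w where "w = sgn (p-c)"
  define s where "s = norm (p-b)"
  define t where "t = norm (p-c)"
  have v1: "v \<bullet> v = 1" using assms by (simp add: v_def dot_square_norm norm_sgn)
  have w1: "w \<bullet> w = 1" using assms by (simp add: w_def dot_square_norm norm_sgn)
  have pv: "p - b = s *\<^sub>R v" using assms by (simp add: v_def s_def sgn_div_norm)
  have pw: "p - c = t *\<^sub>R w" using assms by (simp add: w_def t_def sgn_div_norm)
  have cb: "c - b = s *\<^sub>R v - t *\<^sub>R w" using pv pw by (metis diff_diff_eq2 diff_diff_cancel diff_add_cancel add_diff_cancel_left' eq_diff_eq)
  have e1: "(c-b) \<bullet> v = s - t * (v \<bullet> w)" using v1 by (simp add: cb inner_diff_left inner_commute[of w v])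
  have e2: "(c-b) \<bullet> w = s * (v \<bullet> w) - t" using w1 by (simp add: cb inner_diff_left inner_commute[of w v])
  have d: "1 - (v \<bullet> w)^2 \<noteq> 0" using assms(3) by (simp add: v_def w_def)
  have "((c-b) \<bullet> v - (v \<bullet> w) * ((c-b) \<bullet> w)) / (1 - (v \<bullet> w)^2) = s"
    using d by (simp add: e1 e2 field_simps power2_eq_square)
  then show ?thesis using pv unfolding v_def[symmetric] w_def[symmetric]
    by (metis add.commute diff_add_cancel)
qed

lemma triang:
  fixes a b c :: "'b::euclidean_space"
  assumes "a \<noteq> b" "a \<noteq> c" "(sgn (a-b) \<bullet> sgn (a-c))^2 < 1" "\<epsilon> > 0"
  shows "\<exists>\<eta>>0. \<forall>p. p \<noteq> b \<longrightarrow> p \<noteq> c \<longrightarrow> norm (sgn (p-b) - sgn (a-b)) < \<eta>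
            \<longrightarrow> norm (sgn (p-c) - sgn (a-c)) < \<eta> \<longrightarrow> norm (p-a) < \<epsilon>"
proof -
  define F where "F q = b + (((c-b) \<bullet> fst q - (fst q \<bullet> snd q) * ((c-b) \<bullet> snd q))
                  / (1 - (fst q \<bullet> snd q)^2)) *\<^sub>R fst q" for q :: "'b \<times> 'b"
  define G where "G q = (fst q \<bullet> snd q)^2" for q :: "'b \<times> 'b"
  define q0 where "q0 = (sgn (a-b), sgn (a-c))"
  have G0: "G q0 < 1" using assms(3) by (simp add: G_def q0_def)
  have "continuous (at q0) F" unfolding F_def using G0
    by (intro continuous_intros) (auto simp: G_def)
  then obtain d1 where d1: "d1 > 0" "\<And>q. dist q q0 < d1 \<Longrightarrow> dist (F q) (F q0) < \<epsilon>"
    using assms(4) unfolding continuous_at_eps_delta by blast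
  have "continuous (at q0) G" unfolding G_def by (intro continuous_intros)
  then obtain d2 where d2: "d2 > 0" "\<And>q. dist q q0 < d2 \<Longrightarrow> dist (G q) (G q0) < 1 - G q0"
    using G0 unfolding continuous_at_eps_delta by (metis diff_gt_0_iff_gt)
  have Fa: "F q0 = a" using triang_eq[of a b c] assms G0 by (simp add: F_def G_def q0_def)
  show ?thesis
  proof (intro exI[of _ "min d1 d2 / 2"] conjI allI impI)
    show "min d1 d2 / 2 > 0" using d1 d2 by simp
    fix p assume p: "p \<noteq> b" "p \<noteq> c" "norm (sgn (p-b) - sgn (a-b)) < min d1 d2 / 2"
       "norm (sgn (p-c) - sgn (a-c)) < min d1 d2 / 2"
    define q where "q = (sgn (p-b), sgn (p-c))"
    have "dist q q0 \<le> norm (sgn (p-b) - sgn (a-b)) + norm (sgn (p-c) - sgn (a-c))"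
    proof -
      have "dist q q0 = sqrt ((dist (sgn (p-b)) (sgn (a-b)))^2 + (dist (sgn (p-c)) (sgn (a-c)))^2)"
        by (simp add: q_def q0_def dist_Pair_Pair)
      also have "\<dots> \<le> \<bar>dist (sgn (p-b)) (sgn (a-b))\<bar> + \<bar>dist (sgn (p-c)) (sgn (a-c))\<bar>"
        by (rule sqrt_sum_squares_le_sum_abs)
      finally show ?thesis by (simp add: dist_norm)
    qed
    then have dq: "dist q q0 < min d1 d2" using p by linarith
    then have "dist (G q) (G q0) < 1 - G q0" using d2 by auto
    then have "G q < 1" by (simp add: dist_real_def)
    then have "p = F q" using triang_eq[of p b c] p by (simp add: F_def G_def q_def)
    then show "norm (p-a) < \<epsilon>" using d1(2)[of q] dq Fa by (simp add: dist_norm)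
  qed
qed

lemma Phi_sgn: "Phi f (x,y) = sgn (f x - f y)"
  by (simp add: Phi_def sgn_div_norm)

lemma topspace_conf2: "topspace (conf2 X) = {(x, y). x \<in> topspace X \<and> y \<in> topspace X \<and> x \<noteq> y}"
  by (auto simp: conf2_def topspace_subtopology)

lemma Phi_unit:
  assumes "inj_on f (topspace X)" "q \<in> topspace (conf2 X)"
  shows "norm (Phi f q) = 1"
proof -
  obtain x y where q: "q = (x,y)" "x \<in> topspace X" "y \<in> topspace X" "x \<noteq> y"
    using assms(2) by (auto simp: topspace_conf2)
  then have "f x \<noteq> f y" using assms(1) by (meson inj_onD)
  then show ?thesis by (simp add: q Phi_sgn norm_sgn)
qed

lemma inner_unit_bounds:
  fixes u v :: "'b::euclidean_space"
  assumes "norm u = 1" "norm v = 1"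
  shows "-1 \<le> u \<bullet> v" "u \<bullet> v \<le> 1"
  using Cauchy_Schwarz_ineq2[of u v] assms by auto

lemma geod_le_iff:
  fixes u v :: "'b::euclidean_space"
  assumes "norm u = 1" "norm v = 1" "-1 \<le> c" "c \<le> 1"
  shows "geod_dist u v \<le> arccos c \<longleftrightarrow> c \<le> u \<bullet> v"
proof
  assume "geod_dist u v \<le> arccos c"
  then show "c \<le> u \<bullet> v"
    using arccos_less_arccos[of "u \<bullet> v" c] inner_unit_bounds[OF assms(1,2)] assms(3,4)
    by (force simp: geod_dist_def)
next
  assume "c \<le> u \<bullet> v"
  then show "geod_dist u v \<le> arccos c"
    using arccos_le_arccos[of c "u \<bullet> v"] inner_unit_bounds[OF assms(1,2)] assms(3,4)
    by (simp add: geod_dist_def)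
qed

lemma geod_bounds:
  fixes u v :: "'b::euclidean_space"
  assumes "norm u = 1" "norm v = 1"
  shows "0 \<le> geod_dist u v" "geod_dist u v \<le> pi"
  using arccos_bounded[OF inner_unit_bounds[OF assms]] by (auto simp: geod_dist_def)

lemma chord_sq:
  fixes u v :: "'b::euclidean_space"
  assumes "norm u = 1" "norm v = 1"
  shows "(norm (u - v))^2 = 2 - 2 * (u \<bullet> v)"
proof -
  have "(norm (u - v))^2 = (u - v) \<bullet> (u - v)" by (simp add: dot_square_norm)
  also have "\<dots> = u \<bullet> u + v \<bullet> v - 2 * (u \<bullet> v)"
    by (simp add: inner_diff_left inner_diff_right inner_commute)
  also have "\<dots> = 2 - 2 * (u \<bullet> v)" using assms by (simp add: dot_square_norm)
  finally show ?thesis .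
qed

lemma small_geod_small_chord:
  fixes u v :: "'b::euclidean_space"
  assumes "norm u = 1" "norm v = 1" "\<epsilon> > 0"
    and "geod_dist u v \<le> arccos (max (1 - \<epsilon>^2/4) 0)"
  shows "norm (u - v) < \<epsilon>"
proof -
  have "max (1 - \<epsilon>^2/4) 0 \<le> u \<bullet> v"
    using geod_le_iff[OF assms(1,2), of "max (1 - \<epsilon>^2/4) 0"] assms(3,4) by simp
  moreover have "\<epsilon>^2 > 0" using assms(3) by simp
  ultimately have "(norm (u - v))^2 < \<epsilon>^2" using chord_sq[OF assms(1,2)] by linarith
  then show ?thesis using assms(3) by (meson norm_ge_zero power_less_imp_less_base less_imp_le)
qed

lemma arccos_pos_choice:
  assumes "\<epsilon> > 0" shows "arccos (max (1 - \<epsilon>^2/4) 0) > 0"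
proof -
  have "max (1 - \<epsilon>^2/4) 0 < 1" using assms by auto
  then have "arccos 1 < arccos (max (1 - \<epsilon>^2/4) 0)"
    by (intro arccos_less_arccos) auto
  then show ?thesis by simp
qed

lemma small_chord_small_geod:
  fixes u v :: "'b::euclidean_space"
  assumes "norm u = 1" "norm v = 1" "\<delta> > 0"
    and "norm (u - v) < sqrt (2 - 2 * cos (min \<delta> pi))"
  shows "geod_dist u v \<le> \<delta>"
proof -
  define d where "d = min \<delta> pi"
  have d: "0 \<le> d" "d \<le> pi" "d \<le> \<delta>" using assms(3) by (auto simp: d_def)
  have "(norm (u - v))^2 < 2 - 2 * cos d"
    using assms(4) unfolding d_def[symmetric]
    by (metis norm_ge_zero real_sqrt_less_iff real_sqrt_pow2_iff real_sqrt_abs power2_eq_square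
        abs_of_nonneg real_less_rsqrt)
  then have "cos d \<le> u \<bullet> v" using chord_sq[OF assms(1,2)] by linarith
  then have "geod_dist u v \<le> arccos (cos d)"
    using geod_le_iff[OF assms(1,2), of "cos d"] by simp
  then show ?thesis using arccos_cos[OF d(1,2)] d(3) by simp
qed

lemma sqrt_cos_pos: assumes "\<delta> > 0" shows "sqrt (2 - 2 * cos (min \<delta> pi)) > 0"
proof -
  have "cos (min \<delta> pi) < cos 0" using assms by (intro cos_monotone_0_pi) auto
  then show ?thesis by simp
qed

lemma cont_eucl_iff:
  "continuous_map X euclidean g \<longleftrightarrow>
    (\<forall>x \<in> topspace X. \<forall>\<epsilon>>0. \<exists>U. openin X U \<and> x \<in> U \<and> (\<forall>y\<in>U. dist (g x) (g y) < \<epsilon>))"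
  using Met_TC.continuous_map_to_metric[of X g] by simp

lemma diam_upper:
  assumes "inj_on f (topspace X)" "U \<subseteq> topspace (conf2 X)" "p \<in> U" "q \<in> U"
  shows "geod_dist (Phi f p) (Phi f q) \<le> diam_wrt geod_dist (Phi f ` U)"
  unfolding diam_wrt_def
proof (rule cSup_upper)
  show "geod_dist (Phi f p) (Phi f q) \<in> {geod_dist u v |u v. u \<in> Phi f ` U \<and> v \<in> Phi f ` U}"
    using assms by blast
  show "bdd_above {geod_dist u v |u v. u \<in> Phi f ` U \<and> v \<in> Phi f ` U}"
    unfolding bdd_above_def
    using assms(1,2) geod_bounds(2)[OF Phi_unit Phi_unit] by blast
qed

lemma diam_le:
  assumes "inj_on f (topspace X)" "U \<subseteq> topspace (conf2 X)" "U \<noteq> {}"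
    "\<And>p q. p \<in> U \<Longrightarrow> q \<in> U \<Longrightarrow> geod_dist (Phi f p) (Phi f q) \<le> \<delta>"
  shows "diam_wrt geod_dist (Phi f ` U) \<le> \<delta>"
  unfolding diam_wrt_def
proof (rule cSup_least)
  obtain p where "p \<in> U" using assms(3) by auto
  then show "{geod_dist u v |u v. u \<in> Phi f ` U \<and> v \<in> Phi f ` U} \<noteq> {}" by blast
qed (use assms in auto)

lemma alpha0_local:
  assumes inj: "inj_on f (topspace X)" and a0: "alpha X f = 0"
    and p: "p \<in> topspace (conf2 X)" and d: "\<delta> > 0"
  shows "\<exists>U. openin (conf2 X) U \<and> p \<in> U \<and> (\<forall>q\<in>U. geod_dist (Phi f p) (Phi f q) \<le> \<delta>)"
proof -
  define D where "D = {\<delta>. \<delta> \<ge> 0 \<and> (\<forall>p \<in> topspace (conf2 X). \<exists>U. openin (conf2 X) U \<and> p \<in> U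
      \<and> diam_wrt geod_dist (Phi f ` U) \<le> \<delta>)}"
  have aD: "alpha X f = Inf D" by (simp add: alpha_def delta_wrt_def D_def)
  have "pi \<in> D"
    unfolding D_def
  proof (safe)
    show "0 \<le> pi" by simp
    fix p assume "p \<in> topspace (conf2 X)"
    then show "\<exists>U. openin (conf2 X) U \<and> p \<in> U \<and> diam_wrt geod_dist (Phi f ` U) \<le> pi"
      by (intro exI[of _ "topspace (conf2 X)"])
         (auto intro!: diam_le inj geod_bounds Phi_unit)
  qed
  then have "D \<noteq> {}" by auto
  moreover have "bdd_below D" unfolding D_def bdd_below_def by auto
  ultimately obtain d' where "d' \<in> D" "d' < \<delta>"
    using cInf_less_iff[of D \<delta>] a0 aD d by auto
  then obtain U where U: "openin (conf2 X) U" "p \<in> U" "diam_wrt geod_dist (Phi f ` U) \<le> d'"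
    using p unfolding D_def by auto
  have "\<forall>q\<in>U. geod_dist (Phi f p) (Phi f q) \<le> \<delta>"
    using diam_upper[OF inj openin_subset[OF U(1)] U(2)] U(3) \<open>d' < \<delta>\<close> by force
  then show ?thesis using U by blast
qed

lemma alpha0_cont:
  assumes inj: "inj_on f (topspace X)" and a0: "alpha X f = 0"
  shows "continuous_map (conf2 X) euclidean (Phi f)"
  unfolding cont_eucl_iff
proof (intro ballI allI impI)
  fix p and \<epsilon> :: real assume p: "p \<in> topspace (conf2 X)" and e: "\<epsilon> > 0"
  obtain U where U: "openin (conf2 X) U" "p \<in> U"
    "\<forall>q\<in>U. geod_dist (Phi f p) (Phi f q) \<le> arccos (max (1 - \<epsilon>^2/4) 0)"
    using alpha0_local[OF inj a0 p arccos_pos_choice[OF e]] by blast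
  have "\<forall>q\<in>U. dist (Phi f p) (Phi f q) < \<epsilon>"
    using U(3) openin_subset[OF U(1)] p e
    by (auto simp: dist_norm intro!: small_geod_small_chord Phi_unit[OF inj])
  then show "\<exists>U. openin (conf2 X) U \<and> p \<in> U \<and> (\<forall>y\<in>U. dist (Phi f p) (Phi f y) < \<epsilon>)"
    using U by blast
qed

lemma cont_Phi:
  assumes inj: "inj_on f (topspace X)" and hf: "continuous_map X euclidean f"
  shows "continuous_map (conf2 X) euclidean (Phi f)"
proof -
  define d where "d q = f (fst q) - f (snd q)" for q
  have c1: "continuous_map (conf2 X) euclidean (f \<circ> fst)"
    unfolding conf2_def
    by (rule continuous_map_compose[OF continuous_map_from_subtopology[OF continuous_map_fst] hf])
  have c2: "continuous_map (conf2 X) euclidean (f \<circ> snd)"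
    unfolding conf2_def
    by (rule continuous_map_compose[OF continuous_map_from_subtopology[OF continuous_map_snd] hf])
  have cd: "continuous_map (conf2 X) euclidean d"
    using continuous_map_diff[OF c1 c2] unfolding d_def[abs_def] by (simp add: o_def)
  have nz: "d q \<noteq> 0" if "q \<in> topspace (conf2 X)" for q
    using that inj by (auto simp: d_def topspace_conf2 dest: inj_onD)
  have eq: "Phi f = (\<lambda>q. sgn (d q))" by (auto simp: Phi_sgn d_def)
  show ?thesis unfolding eq
    using cd nz unfolding continuous_map_atin by (auto intro: tendsto_sgn)
qed

lemma cont_alpha0:
  assumes inj: "inj_on f (topspace X)" and hf: "continuous_map X euclidean f"
  shows "alpha X f = 0"
proof -
  define D where "D = {\<delta>. \<delta> \<ge> 0 \<and> (\<forall>p \<in> topspace (conf2 X). \<exists>U. openin (conf2 X) U \<and> p \<in> U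
      \<and> diam_wrt geod_dist (Phi f ` U) \<le> \<delta>)}"
  have aD: "alpha X f = Inf D" by (simp add: alpha_def delta_wrt_def D_def)
  have cP: "continuous_map (conf2 X) euclidean (Phi f)" by (rule cont_Phi[OF inj hf])
  have inD: "\<delta> \<in> D" if d: "\<delta> > 0" for \<delta>
    unfolding D_def
  proof (safe)
    show "0 \<le> \<delta>" using d by simp
    fix p assume p: "p \<in> topspace (conf2 X)"
    define \<eta> where "\<eta> = sqrt (2 - 2 * cos (min \<delta> pi))"
    have eta: "\<eta> > 0" using sqrt_cos_pos[OF d] by (simp add: \<eta>_def)
    define U where "U = {q \<in> topspace (conf2 X). Phi f q \<in> ball (Phi f p) (\<eta>/2)}"
    have oU: "openin (conf2 X) U" unfolding U_def
      by (rule openin_continuous_map_preimage[OF cP]) simp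
    have pU: "p \<in> U" using p eta by (simp add: U_def)
    have "diam_wrt geod_dist (Phi f ` U) \<le> \<delta>"
    proof (rule diam_le[OF inj])
      show "U \<subseteq> topspace (conf2 X)" by (auto simp: U_def)
      show "U \<noteq> {}" using pU by auto
      fix q r assume q: "q \<in> U" and r: "r \<in> U"
      have "norm (Phi f q - Phi f r) \<le> dist (Phi f p) (Phi f q) + dist (Phi f p) (Phi f r)"
        by (metis dist_commute dist_norm dist_triangle)
      also have "\<dots> < \<eta>" using q r by (simp add: U_def)
      finally have "norm (Phi f q - Phi f r) < \<eta>" .
      then show "geod_dist (Phi f q) (Phi f r) \<le> \<delta>"
        using q r d by (intro small_chord_small_geod Phi_unit[OF inj]) (auto simp: U_def \<eta>_def)
    qed
    then show "\<exists>U. openin (conf2 X) U \<and> p \<in> U \<and> diam_wrt geod_dist (Phi f ` U) \<le> \<delta>"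
      using oU pU by blast
  qed
  have ne: "D \<noteq> {}" using inD[of 1] by auto
  have bb: "bdd_below D" unfolding D_def bdd_below_def by auto
  have "Inf D \<ge> 0" using ne by (intro cInf_greatest) (auto simp: D_def)
  moreover have "Inf D \<le> \<delta>" if "\<delta> > 0" for \<delta>
    using cInf_lower[OF inD[OF that] bb] .
  ultimately have "Inf D = 0"
    by (metis dual_order.antisym field_le_epsilon add_0)
  then show ?thesis using aD by simp
qed


lemma sgn_unit_inner: "x \<noteq> 0 \<Longrightarrow> sgn x \<bullet> sgn x = (1::real)"
  for x :: "'b::euclidean_space"
  by (simp add: dot_square_norm norm_sgn)

lemma gap_lemma:
  fixes a b c :: "'b::euclidean_space"
  assumes "a \<noteq> b" "a \<noteq> c" "b \<noteq> c" "sgn (b - c) = sgn (a - c)"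
  shows "(sgn (a-b) \<bullet> sgn (a-c))^2 = 1"
proof -
  define s where "s = sgn (a - c)"
  define k where "k = norm (a-c) - norm (b-c)"
  have "a - c = norm (a-c) *\<^sub>R s" using assms(2) by (simp add: s_def sgn_div_norm)
  moreover have "b - c = norm (b-c) *\<^sub>R s"
  proof -
    have "b - c = norm (b-c) *\<^sub>R sgn (b - c)" using assms(3) by (simp add: sgn_div_norm)
    then show ?thesis using assms(4) by (simp add: s_def)
  qed
  ultimately have "(a - c) - (b - c) = k *\<^sub>R s" unfolding k_def
    by (simp add: scaleR_diff_left)
  then have ab: "a - b = k *\<^sub>R s" by simp
  have "k \<noteq> 0" using ab assms(1) by auto
  have s1: "s \<bullet> s = 1" using assms(2) by (simp add: s_def sgn_unit_inner)
  have ss: "sgn s = s" using s1 by (simp add: sgn_div_norm norm_eq_sqrt_inner)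
  have "sgn (a - b) = sgn k *\<^sub>R sgn s"
    unfolding ab by (rule sgn_scaleR)
  then have "sgn (a - b) = sgn k *\<^sub>R s" using ss by simp
  then have "sgn (a-b) \<bullet> s = sgn k" using s1 by simp
  then show ?thesis using \<open>k \<noteq> 0\<close> by (simp add: s_def[symmetric] sgn_if)
qed

lemma prod_nbhd:
  assumes cP: "continuous_map (conf2 X) euclidean (Phi f)"
    and p: "(x0, y) \<in> topspace (conf2 X)" and e: "\<eta> > 0"
  shows "\<exists>V1 V2. openin X V1 \<and> openin X V2 \<and> x0 \<in> V1 \<and> y \<in> V2 \<and>
     (\<forall>u\<in>V1. \<forall>v\<in>V2. u \<noteq> v \<longrightarrow> norm (Phi f (u,v) - Phi f (x0,y)) < \<eta>)"
proof -
  define W where "W = {q \<in> topspace (conf2 X). Phi f q \<in> ball (Phi f (x0,y)) \<eta>}"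
  have oW: "openin (conf2 X) W" unfolding W_def
    by (rule openin_continuous_map_preimage[OF cP]) simp
  have "\<exists>T. openin (prod_topology X X) T \<and>
     W = T \<inter> {(x, y). x \<in> topspace X \<and> y \<in> topspace X \<and> x \<noteq> y}"
    using oW unfolding conf2_def openin_subtopology .
  then obtain T where T: "openin (prod_topology X X) T"
     "W = T \<inter> {(x, y). x \<in> topspace X \<and> y \<in> topspace X \<and> x \<noteq> y}"
    by blast
  have "(x0, y) \<in> W" using p e by (simp add: W_def)
  then have "(x0, y) \<in> T" unfolding T(2) by simp
  then have "\<exists>U V. openin X U \<and> openin X V \<and> x0 \<in> U \<and> y \<in> V \<and> U \<times> V \<subseteq> T"
    using openin_prod_topology_alt[THEN iffD1, OF T(1), rule_format] by blast
  then obtain V1 V2 where V: "openin X V1" "openin X V2" "x0 \<in> V1" "y \<in> V2" "V1 \<times> V2 \<subseteq> T"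
    by blast
  have "\<forall>u\<in>V1. \<forall>v\<in>V2. u \<noteq> v \<longrightarrow> norm (Phi f (u,v) - Phi f (x0,y)) < \<eta>"
  proof (intro ballI impI)
    fix u v assume uv: "u \<in> V1" "v \<in> V2" "u \<noteq> v"
    have "u \<in> topspace X" "v \<in> topspace X"
      using uv openin_subset[OF V(1)] openin_subset[OF V(2)] by auto
    moreover have "(u,v) \<in> T" using V(5) uv by blast
    ultimately have "(u,v) \<in> W" unfolding T(2) using uv(3) by simp
    then have "dist (Phi f (x0,y)) (Phi f (u,v)) < \<eta>" unfolding W_def by simp
    then show "norm (Phi f (u,v) - Phi f (x0,y)) < \<eta>"
      by (metis dist_commute dist_norm)
  qed
  then show ?thesis using V by blast
qed

lemma NC:
  fixes f :: "'a \<Rightarrow> 'b::euclidean_space" and \<psi> :: "real^2 \<Rightarrow> 'a"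
  assumes inj: "inj_on f (topspace X)" and cP: "continuous_map (conf2 X) euclidean (Phi f)"
    and h\<psi>: "continuous_map (top_of_set (sphere 0 1)) X \<psi>"
    and anti: "\<forall>x \<in> sphere 0 1. \<psi> x \<noteq> \<psi> (- x)"
    and x0: "x0 \<in> topspace X"
  shows "\<exists>y z. y \<in> topspace X \<and> z \<in> topspace X \<and> y \<noteq> x0 \<and> z \<noteq> x0 \<and>
           (sgn (f x0 - f y) \<bullet> sgn (f x0 - f z))^2 < 1"
proof (rule ccontr)
  assume H: "\<not> ?thesis"
  have H': "(sgn (f x0 - f y) \<bullet> sgn (f x0 - f z))^2 \<ge> 1"
    if "y \<in> topspace X" "z \<in> topspace X" "y \<noteq> x0" "z \<noteq> x0" for y z
    using H that by (meson not_less)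
  have \<psi>X: "\<psi> t \<in> topspace X" if "t \<in> sphere 0 1" for t
    using h\<psi> that by (auto simp: continuous_map_def)
  obtain t0 :: "real^2" where t0: "t0 \<in> sphere 0 1"
    using sphere_eq_empty[of "0::real^2" 1] by fastforce
  have mt0: "- t0 \<in> sphere 0 1" using t0 by simp
  obtain y1 where y1: "y1 \<in> topspace X" "y1 \<noteq> x0"
    using \<psi>X[OF t0] \<psi>X[OF mt0] anti t0 by metis
  define e where "e = sgn (f x0 - f y1)"
  have fne: "f x0 \<noteq> f y1" using inj y1 x0 by (metis inj_onD)
  have ne: "norm e = 1" using fne by (simp add: e_def norm_sgn)
  have ee: "e \<bullet> e = 1" using ne by (simp add: dot_square_norm)
  have line: "\<exists>s. f w = f x0 + s *\<^sub>R e" if w: "w \<in> topspace X" for w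
  proof (cases "w = x0")
    case True then show ?thesis by (intro exI[of _ 0]) simp
  next
    case False
    define g where "g = sgn (f x0 - f w)"
    have fw: "f x0 \<noteq> f w" using inj w x0 False by (metis inj_onD)
    have ng: "norm g = 1" using fw by (simp add: g_def norm_sgn)
    have "(g \<bullet> e)^2 \<ge> 1" using H'[OF w y1(1) False y1(2)] by (simp add: g_def e_def)
    moreover have "\<bar>g \<bullet> e\<bar> \<le> 1" using Cauchy_Schwarz_ineq2[of g e] ng ne by simp
    ultimately have "\<bar>g \<bullet> e\<bar> = 1"
      by (metis abs_le_square_iff abs_of_nonneg dual_order.antisym one_power2 zero_le_one
          power2_abs abs_ge_zero)
    then have "\<bar>g \<bullet> e\<bar> = norm g * norm e" using ng ne by simp
    then have "e = g \<or> e = - g" using norm_cauchy_schwarz_abs_eq[of g e] ng ne by simp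
    moreover have "f x0 - f w = norm (f x0 - f w) *\<^sub>R g" using fw by (simp add: g_def sgn_div_norm)
    ultimately show ?thesis
    proof (elim disjE)
      assume "e = g" and h: "f x0 - f w = norm (f x0 - f w) *\<^sub>R g"
      then have "f w = f x0 + (- norm (f x0 - f w)) *\<^sub>R e" by (metis add_diff_cancel_left' diff_add_cancel scaleR_minus_left diff_conv_add_uminus add.commute)
      then show ?thesis by blast
    next
      assume "e = - g" and h: "f x0 - f w = norm (f x0 - f w) *\<^sub>R g"
      then have "f w = f x0 + (norm (f x0 - f w)) *\<^sub>R e" by (metis add_diff_cancel_left' diff_add_cancel scaleR_minus_right diff_conv_add_uminus add.commute)
      then show ?thesis by blast
    qed
  qed
  have pm: "Phi f (p,q) \<bullet> e = 1 \<or> Phi f (p,q) \<bullet> e = -1"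
    if pq: "p \<in> topspace X" "q \<in> topspace X" "p \<noteq> q" for p q
  proof -
    obtain sp where sp: "f p = f x0 + sp *\<^sub>R e" using line[OF pq(1)] by blast
    obtain sq where sq: "f q = f x0 + sq *\<^sub>R e" using line[OF pq(2)] by blast
    have "f p \<noteq> f q" using inj pq by (metis inj_onD)
    have d: "f p - f q = (sp - sq) *\<^sub>R e" using sp sq by (simp add: scaleR_diff_left)
    then have "sp \<noteq> sq" using \<open>f p \<noteq> f q\<close> by auto
    have se: "sgn e = e" using ne by (simp add: sgn_div_norm)
    have "Phi f (p,q) = sgn (sp - sq) *\<^sub>R e" using se by (simp add: Phi_sgn d sgn_scaleR)
    then have "Phi f (p,q) \<bullet> e = sgn (sp - sq)" using ee by simp
    then show ?thesis using \<open>sp \<noteq> sq\<close> by (simp add: sgn_if)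
  qed
  define k where "k t = Phi f (\<psi> t, \<psi> (- t)) \<bullet> e" for t
  have neg: "continuous_map (top_of_set (sphere (0::real^2) 1)) (top_of_set (sphere 0 1)) uminus"
    by (auto simp: continuous_map_in_subtopology continuous_on_minus continuous_on_id)
  have c2: "continuous_map (top_of_set (sphere 0 1)) X (\<lambda>x. \<psi> (- x))"
    using continuous_map_compose[OF neg h\<psi>] by (simp add: o_def)
  have c3: "(\<lambda>t. (\<psi> t, \<psi> (- t))) \<in> topspace (top_of_set (sphere 0 1)) \<rightarrow>
        {(x, y). x \<in> topspace X \<and> y \<in> topspace X \<and> x \<noteq> y}"
      using \<psi>X anti by auto
  have m: "continuous_map (top_of_set (sphere 0 1)) (conf2 X) (\<lambda>t. (\<psi> t, \<psi> (- t)))"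
    using h\<psi> c2 c3 unfolding conf2_def
    by (simp add: continuous_map_in_subtopology continuous_map_pairwise o_def)
  have ie: "continuous_map euclidean euclidean (\<lambda>v::'b. v \<bullet> e)"
    by (simp add: continuous_on_inner continuous_on_id continuous_on_const)
  have "continuous_map (top_of_set (sphere 0 1)) euclidean k"
    using continuous_map_compose[OF continuous_map_compose[OF m cP] ie]
    by (simp add: k_def o_def)
  then have ck: "continuous_on (sphere 0 1) k" by simp
  have kv: "k t = 1 \<or> k t = -1" if "t \<in> sphere 0 1" for t
    unfolding k_def using pm \<psi>X that anti by (simp add: norm_minus_cancel)
  have kneg: "k (- t0) = - k t0"
  proof -
    have "f (\<psi> (- t0)) - f (\<psi> t0) = - (f (\<psi> t0) - f (\<psi> (- t0)))" by simp
    then have "sgn (f (\<psi> (- t0)) - f (\<psi> t0)) = - sgn (f (\<psi> t0) - f (\<psi> (- t0)))"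
      by (metis Real_Vector_Spaces.sgn_minus)
    then show ?thesis by (simp add: k_def Phi_sgn)
  qed
  have conn: "connected (k ` sphere 0 1)"
    by (rule connected_continuous_image[OF ck connected_sphere]) simp
  have "k t0 \<in> k ` sphere 0 1" "k (- t0) \<in> k ` sphere 0 1" using t0 mt0 by auto
  then have "0 \<in> k ` sphere 0 1"
    using conn kv[OF t0] kneg unfolding connected_iff_interval
    by (metis neg_0_le_iff_le zero_le_one neg_le_0_iff_le)
  then show False using kv by force
qed

lemma alpha0_imp_cont:
  fixes f :: "'a \<Rightarrow> 'b::euclidean_space" and \<psi> :: "real^2 \<Rightarrow> 'a"
  assumes inj: "inj_on f (topspace X)" and a0: "alpha X f = 0"
    and h\<psi>: "continuous_map (top_of_set (sphere 0 1)) X \<psi>"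
    and anti: "\<forall>x \<in> sphere 0 1. \<psi> x \<noteq> \<psi> (- x)"
  shows "continuous_map X euclidean f"
  unfolding cont_eucl_iff
proof (intro ballI allI impI)
  fix x0 and \<epsilon> :: real assume x0: "x0 \<in> topspace X" and e: "\<epsilon> > 0"
  have cP: "continuous_map (conf2 X) euclidean (Phi f)" by (rule alpha0_cont[OF inj a0])
  obtain y z where yz: "y \<in> topspace X" "z \<in> topspace X" "y \<noteq> x0" "z \<noteq> x0"
     "(sgn (f x0 - f y) \<bullet> sgn (f x0 - f z))^2 < 1"
    using NC[OF inj cP h\<psi> anti x0] by blast
  define a where "a = f x0"
  define b where "b = f y"
  define c where "c = f z"
  have ab: "a \<noteq> b" using inj x0 yz unfolding a_def b_def by (metis inj_onD)
  have ac: "a \<noteq> c" using inj x0 yz unfolding a_def c_def by (metis inj_onD)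
  have "y \<noteq> z"
  proof
    assume "y = z"
    then have "(sgn (f x0 - f y) \<bullet> sgn (f x0 - f z))^2 = 1"
      using ab by (simp add: a_def b_def sgn_unit_inner)
    then show False using yz(5) by simp
  qed
  have bc: "b \<noteq> c" using inj yz \<open>y \<noteq> z\<close> unfolding b_def c_def by (metis inj_onD)
  have t5: "(sgn (a-b) \<bullet> sgn (a-c))^2 < 1" using yz(5) by (simp add: a_def b_def c_def)
  obtain \<eta> where eta: "\<eta> > 0" and tri: "\<And>p. p \<noteq> b \<Longrightarrow> p \<noteq> c \<Longrightarrow> norm (sgn (p-b) - sgn (a-b)) < \<eta>
            \<Longrightarrow> norm (sgn (p-c) - sgn (a-c)) < \<eta> \<Longrightarrow> norm (p-a) < \<epsilon>"
    using triang[OF ab ac t5 e] by blast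
  have "sgn (b - c) \<noteq> sgn (a - c)"
    using gap_lemma[OF ab ac bc] t5 by auto
  then have g1: "norm (sgn (b - c) - sgn (a - c)) > 0" by simp
  have "sgn (c - b) \<noteq> sgn (a - b)"
    using gap_lemma[OF ac ab bc[symmetric]] t5 by (auto simp: inner_commute)
  then have g2: "norm (sgn (c - b) - sgn (a - b)) > 0" by simp
  define \<eta>' where "\<eta>' = min \<eta> (min (norm (sgn (b - c) - sgn (a - c))) (norm (sgn (c - b) - sgn (a - b))))"
  have eta': "\<eta>' > 0" using eta g1 g2 by (simp add: \<eta>'_def)
  have py: "(x0, y) \<in> topspace (conf2 X)" using x0 yz by (auto simp: topspace_conf2)
  have pz: "(x0, z) \<in> topspace (conf2 X)" using x0 yz by (auto simp: topspace_conf2)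
  obtain V1 V2 where V: "openin X V1" "openin X V2" "x0 \<in> V1" "y \<in> V2"
     "\<And>u v. u\<in>V1 \<Longrightarrow> v\<in>V2 \<Longrightarrow> u \<noteq> v \<Longrightarrow> norm (Phi f (u,v) - Phi f (x0,y)) < \<eta>'"
    using prod_nbhd[OF cP py eta'] by blast
  obtain W1 W2 where W: "openin X W1" "openin X W2" "x0 \<in> W1" "z \<in> W2"
     "\<And>u v. u\<in>W1 \<Longrightarrow> v\<in>W2 \<Longrightarrow> u \<noteq> v \<Longrightarrow> norm (Phi f (u,v) - Phi f (x0,z)) < \<eta>'"
    using prod_nbhd[OF cP pz eta'] by blast
  have yW: "y \<notin> W1"
  proof
    assume "y \<in> W1"
    then have "norm (Phi f (y,z) - Phi f (x0,z)) < \<eta>'" using W(4,5) \<open>y \<noteq> z\<close> by blast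
    then have "norm (sgn (b - c) - sgn (a - c)) < \<eta>'" by (simp add: Phi_sgn a_def b_def c_def)
    then show False by (simp add: \<eta>'_def)
  qed
  have zV: "z \<notin> V1"
  proof
    assume "z \<in> V1"
    then have "norm (Phi f (z,y) - Phi f (x0,y)) < \<eta>'" using V(4,5) \<open>y \<noteq> z\<close> by blast
    then have "norm (sgn (c - b) - sgn (a - b)) < \<eta>'" by (simp add: Phi_sgn a_def b_def c_def)
    then show False by (simp add: \<eta>'_def)
  qed
  have "\<forall>x\<in>V1 \<inter> W1. dist (f x0) (f x) < \<epsilon>"
  proof
    fix x assume x: "x \<in> V1 \<inter> W1"
    have xt: "x \<in> topspace X" using x openin_subset[OF V(1)] by auto
    have "x \<noteq> y" "x \<noteq> z" using x yW zV by auto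
    then have fb: "f x \<noteq> b" and fc: "f x \<noteq> c"
      using inj xt yz unfolding b_def c_def by (metis inj_onD)+
    have "norm (Phi f (x,y) - Phi f (x0,y)) < \<eta>'" using V(4,5) x \<open>x \<noteq> y\<close> by blast
    then have n1: "norm (sgn (f x - b) - sgn (a - b)) < \<eta>"
      by (simp add: Phi_sgn a_def b_def \<eta>'_def)
    have "norm (Phi f (x,z) - Phi f (x0,z)) < \<eta>'" using W(4,5) x \<open>x \<noteq> z\<close> by blast
    then have n2: "norm (sgn (f x - c) - sgn (a - c)) < \<eta>"
      by (simp add: Phi_sgn a_def c_def \<eta>'_def)
    have "norm (f x - a) < \<epsilon>" by (rule tri[OF fb fc n1 n2])
    then show "dist (f x0) (f x) < \<epsilon>" by (simp add: a_def dist_norm norm_minus_commute)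
  qed
  moreover have "openin X (V1 \<inter> W1)" using V(1) W(1) by blast
  moreover have "x0 \<in> V1 \<inter> W1" using V(3) W(3) by blast
  ultimately show "\<exists>U. openin X U \<and> x0 \<in> U \<and> (\<forall>y\<in>U. dist (f x0) (f y) < \<epsilon>)" by blast
qed

theorem corollary3p8:
  fixes X :: "'a topology" and f :: "'a \<Rightarrow> 'b::euclidean_space"
    and \<psi> :: "real^2 \<Rightarrow> 'a"
  assumes "inj_on f (topspace X)"
    and "continuous_map (top_of_set (sphere 0 1)) X \<psi>"
    and "\<forall>x \<in> sphere 0 1. \<psi> x \<noteq> \<psi> (- x)"
  shows "alpha X f = 0 \<longleftrightarrow> continuous_map X euclidean f"
  using alpha0_imp_cont[OF assms(1) _ assms(2,3)] cont_alpha0[OF assms(1)] by blast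

end
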